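(* Let $\Sigma$ be a finite totally ordered alphabet, let $W = a_1\cdots a_n \in \Sigma^+$ have Lyndon factorization $W = L_1 L_2 \cdots L_k$, and let $1 \le l < k$, $m = |L_1 \cdots L_l|$. Let $sort(L_1\cdots L_l)$ be the list of positions $1,\dots,m$ sorted by the lexicographic order of the suffixes $W[i,m]$ of $L_1\cdots L_l$, let $sort(L_{l+1}\cdots L_k)$ be the list of positions $m+1,\dots,n$ sorted by the lexicographic order of the suffixes $W[i,n]$ of $L_{l+1}\cdots L_k$, and let $sort(L_1\cdots L_k)$ be the list of positions $1,\dots,n$ sorted by the lexicographic order of the suffixes $W[i,n]$ of $W$. Then $sort(L_1 \cdots L_k) = merge(sort(L_1\cdots L_l), sort(L_{l+1}\cdots L_k))$, where the merge compares positions by the lexicographic order of the corresponding suffixes of $W$.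
   Context: $W[i,j] = a_i \cdots a_j$. The lexicographic order is the usual one, with a proper prefix smaller than the longer word. A Lyndon word is a nonempty primitive word strictly smaller than all its other cyclic shifts (conjugates). The Lyndon factorization of $W$ is the unique factorization $W = L_1\cdots L_k$ into Lyndon words with $L_1 \ge \cdots \ge L_k$ lexicographically. If $l_1, l_2$ are two sorted lists of elements of a totally ordered set, $merge(l_1,l_2)$ is the sorted list of all elements of $l_1$ and $l_2$. *)

theory Defs
  imports Main
begin

definition lex_less :: "'a::linorder list \<Rightarrow> 'a list \<Rightarrow> bool" where
  "lex_less u v \<longleftrightarrow> (u, v) \<in> lexord {(a, b). a < b}"

definition lex_le :: "'a::linorder list \<Rightarrow> 'a list \<Rightarrow> bool" where
  "lex_le u v \<longleftrightarrow> u = v \<or> lex_less u v"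

definition primitive :: "'a list \<Rightarrow> bool" where
  "primitive w \<longleftrightarrow> \<not> (\<exists>u k. 2 \<le> k \<and> w = concat (replicate k u))"

definition lyndon :: "'a::linorder list \<Rightarrow> bool" where
  "lyndon w \<longleftrightarrow> w \<noteq> [] \<and> primitive w \<and>
     (\<forall>i. 0 < i \<and> i < length w \<longrightarrow> lex_less w (rotate i w))"

definition lyndon_factorization :: "'a::linorder list list \<Rightarrow> 'a list \<Rightarrow> bool" where
  "lyndon_factorization Ls W \<longleftrightarrow> concat Ls = W \<and> (\<forall>L\<in>set Ls. lyndon L) \<and>
     sorted_wrt (\<lambda>x y. lex_le y x) Ls"

fun insort_by :: "('b \<Rightarrow> 'b \<Rightarrow> bool) \<Rightarrow> 'b \<Rightarrow> 'b list \<Rightarrow> 'b list" where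
  "insort_by lt x [] = [x]"
| "insort_by lt x (y # ys) = (if lt x y then x # y # ys else y # insort_by lt x ys)"

definition sort_by :: "('b \<Rightarrow> 'b \<Rightarrow> bool) \<Rightarrow> 'b list \<Rightarrow> 'b list" where
  "sort_by lt xs = foldr (insort_by lt) xs []"

fun merge_by :: "('b \<Rightarrow> 'b \<Rightarrow> bool) \<Rightarrow> 'b list \<Rightarrow> 'b list \<Rightarrow> 'b list" where
  "merge_by lt [] ys = ys"
| "merge_by lt xs [] = xs"
| "merge_by lt (x # xs) (y # ys) =
     (if lt x y then x # merge_by lt xs (y # ys) else y # merge_by lt (x # xs) ys)"

text \<open>1-based factor W[i,j] = a_i ... a_j.\<close>
definition factor :: "'a list \<Rightarrow> nat \<Rightarrow> nat \<Rightarrow> 'a list" where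
  "factor W i j = take (j + 1 - i) (drop (i - 1) W)"

end

theory Submission
  imports Defs
begin

abbreviation lxp :: "'a::linorder list \<Rightarrow> 'a list \<Rightarrow> bool" where "lxp \<equiv> ord_class.lexordp"

lemma ll: "lex_less = lxp"
  by (auto simp: lex_less_def lexordp_conv_lexord fun_eq_iff)

lemma lex_asym: "lxp (u::'a::linorder list) v \<Longrightarrow> \<not> lxp v u"
  using lexordp_trans lexordp_irreflexive' by blast

lemma lex_len_app: "lxp (v::'a::linorder list) u \<Longrightarrow> length v = length u \<Longrightarrow> lxp (v@b) (u@a)"
proof -
  assume "lxp v u" "length v = length u"
  then obtain p x y s t where "x < y" "v = p @ x # s" "u = p @ y # t"
    unfolding lexordp_iff by auto
  then show ?thesis unfolding lexordp_iff by (metis append.assoc append_Cons)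
qed

lemma lyndon_suffix:
  assumes "lyndon (P::'a::linorder list)" "y \<noteq> []" "P = u @ y"
  shows "lex_le P y"
proof (cases "u = []")
  case True then show ?thesis using assms by (simp add: lex_le_def)
next
  case False
  let ?i = "length u"
  have i: "0 < ?i" "?i < length P" using False assms by auto
  have rot: "rotate ?i P = y @ u" using assms by (simp add: rotate_drop_take)
  have A: "lxp P (y @ u)" using assms(1) i rot by (auto simp: lyndon_def ll)
  show ?thesis
  proof (rule ccontr)
    assume "\<not> lex_le P y"
    then have B: "lxp y P" using lexordp_linear[of P y] by (auto simp: lex_le_def ll)
    then consider (a) c w where "P = y @ c # w"
      | (b) p a b s t where "a < b" "y = p @ a # s" "P = p @ b # t"
      unfolding lexordp_iff by blast
    then show False
    proof cases
      case a
      define v where "v = c # w"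
      have Pv: "P = y @ v" using a v_def by simp
      have lv: "length v = length u" using Pv assms(3) by (metis add.commute length_append add_left_cancel)
      have "lxp (y @ v) (y @ u)" using A Pv by simp
      then have vu: "lxp v u" using lexordp_append_leftD by blast
      have "0 < length y" "length y < length P" using assms Pv v_def by auto
      then have "lxp P (rotate (length y) P)" using assms(1) by (auto simp: lyndon_def ll)
      moreover have "rotate (length y) P = v @ y" using Pv v_def by (simp add: rotate_drop_take)
      ultimately have "lxp (u @ y) (v @ y)" using assms(3) by simp
      moreover have "lxp (v @ y) (u @ y)" using lex_len_app[OF vu lv] .
      ultimately show False using lex_asym by blast
    next
      case b
      have "y @ u = p @ a # (s @ u)" using b by simp
      then have "lxp (y @ u) P" using b unfolding lexordp_iff by blast
      then show False using A lex_asym by blast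
    qed
  qed
qed

lemma lex_le_trans: "lex_le (a::'a::linorder list) b \<Longrightarrow> lex_le b c \<Longrightarrow> lex_le a c"
  unfolding lex_le_def ll using lexordp_trans by blast

lemma lex_le_app: "lex_le (L::'a::linorder list) y \<Longrightarrow> lex_le L (y @ z)"
proof -
  assume "lex_le L y"
  then consider "L = y" | c w where "y = L @ c # w"
    | p a b s t where "a < b" "L = p @ a # s" "y = p @ b # t"
    unfolding lex_le_def ll lexordp_iff by blast
  then show ?thesis
  proof cases
    case 1 then show ?thesis unfolding lex_le_def ll lexordp_iff by (cases z) auto
  next
    case 2
    then have "y @ z = L @ c # (w @ z)" by simp
    then show ?thesis unfolding lex_le_def ll lexordp_iff by blast
  next
    case 3
    then have "y @ z = p @ b # (t @ z)" by simp
    then show ?thesis using 3 unfolding lex_le_def ll lexordp_iff by blast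
  qed
qed

lemma suffix_ge:
  assumes "\<forall>P\<in>set Ps. lyndon P \<and> lex_le (L::'a::linorder list) P"
    and "concat Ps = u @ x" and "x \<noteq> []"
  shows "lex_le L x"
  using assms
proof (induction Ps arbitrary: u)
  case Nil then show ?case by simp
next
  case (Cons P Ps)
  have "P @ concat Ps = u @ x" using Cons.prems by simp
  then obtain us where "(P = u @ us \<and> us @ concat Ps = x) \<or> (P @ us = u \<and> concat Ps = us @ x)"
    unfolding append_eq_append_conv2 by blast
  then show ?case
  proof
    assume h: "P = u @ us \<and> us @ concat Ps = x"
    show ?thesis
    proof (cases "us = []")
      case True then show ?thesis using Cons h by (metis append_Nil list.set_intros(2))
    next
      case False
      have "lex_le P us" using lyndon_suffix[of P us u] False h Cons.prems by auto
      then have "lex_le L us" using Cons.prems lex_le_trans by auto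
      then show ?thesis using h lex_le_app by blast
    qed
  next
    assume "P @ us = u \<and> concat Ps = us @ x"
    then show ?thesis using Cons by auto
  qed
qed

lemma key:
  assumes "sorted_wrt (\<lambda>x y. lex_le y x) (Ps @ Rs)"
    and "\<forall>L\<in>set (Ps @ Rs). lyndon (L::'a::linorder list)"
    and "concat Ps = u @ x" and "x \<noteq> []"
  shows "lxp (concat Rs) (x @ concat Rs)"
  using assms
proof (induction Rs arbitrary: Ps u x)
  case Nil
  then show ?case by (cases x) auto
next
  case (Cons L Rs)
  have "\<forall>P\<in>set Ps. lyndon P \<and> lex_le L P" using Cons.prems(1,2) by (auto simp: sorted_wrt_append)
  then have le: "lex_le L x" using suffix_ge Cons.prems by blast
  have Lne: "L \<noteq> []" using Cons.prems(2) by (auto simp: lyndon_def)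
  have pre: ?case if "x = L @ t" for t
  proof -
    have "concat (Ps @ [L]) = (u @ L) @ (t @ L)" using Cons.prems(3) that by simp
    moreover have "t @ L \<noteq> []" using Lne by simp
    ultimately have "lxp (concat Rs) ((t @ L) @ concat Rs)"
      using Cons.IH[of "Ps @ [L]" "u @ L" "t @ L"] Cons.prems(1,2) by simp
    then have "lxp (L @ concat Rs) (L @ (t @ L) @ concat Rs)" by (rule lexordp_append_leftI)
    then show ?thesis using that by simp
  qed
  from le consider "x = L" | c w where "x = L @ c # w"
    | p a b s t where "a < b" "L = p @ a # s" "x = p @ b # t"
    unfolding lex_le_def ll lexordp_iff by blast
  then show ?case
  proof cases
    case 1 then show ?thesis using pre[of "[]"] by simp
  next
    case 2 then show ?thesis using pre by blast
  next
    case 3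
    have "concat (L # Rs) = p @ a # (s @ concat Rs)" "x @ concat (L # Rs) = p @ b # (t @ concat (L # Rs))"
      using 3 by simp_all
    then show ?thesis using 3(1) unfolding lexordp_iff by blast
  qed
qed

definition sto :: "('b \<Rightarrow> 'b \<Rightarrow> bool) \<Rightarrow> 'b set \<Rightarrow> bool" where
  "sto lt A \<longleftrightarrow> (\<forall>x\<in>A. \<not> lt x x) \<and> (\<forall>x\<in>A. \<forall>y\<in>A. \<forall>z\<in>A. lt x y \<longrightarrow> lt y z \<longrightarrow> lt x z)
     \<and> (\<forall>x\<in>A. \<forall>y\<in>A. x \<noteq> y \<longrightarrow> lt x y \<or> lt y x)"

lemma sto_mono: "sto lt A \<Longrightarrow> B \<subseteq> A \<Longrightarrow> sto lt B"
  unfolding sto_def by blast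

lemma set_insort: "set (insort_by lt x ys) = insert x (set ys)"
  by (induction ys) auto

lemma set_sort: "set (sort_by lt xs) = set xs"
  by (induction xs) (auto simp: sort_by_def set_insort)

lemma stoD:
  "sto lt A \<Longrightarrow> x \<in> A \<Longrightarrow> \<not> lt x x"
  "sto lt A \<Longrightarrow> x \<in> A \<Longrightarrow> y \<in> A \<Longrightarrow> z \<in> A \<Longrightarrow> lt x y \<Longrightarrow> lt y z \<Longrightarrow> lt x z"
  "sto lt A \<Longrightarrow> x \<in> A \<Longrightarrow> y \<in> A \<Longrightarrow> x \<noteq> y \<Longrightarrow> \<not> lt x y \<Longrightarrow> lt y x"
  unfolding sto_def by metis+

lemma sorted_insort:
  "sto lt (insert x (set ys)) \<Longrightarrow> sorted_wrt lt ys \<Longrightarrow> x \<notin> set ys \<Longrightarrow> sorted_wrt lt (insort_by lt x ys)"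
proof (induction ys)
  case Nil then show ?case by simp
next
  case (Cons y ys)
  have s: "sto lt (insert x (set ys))" by (rule sto_mono[OF Cons.prems(1)]) auto
  show ?case
  proof (cases "lt x y")
    case True
    have "\<forall>z\<in>set ys. lt x z"
    proof
      fix z assume z: "z \<in> set ys"
      then have "lt y z" using Cons.prems(2) by simp
      then show "lt x z" using stoD(2)[OF Cons.prems(1), of x y z] True z by simp
    qed
    then show ?thesis using True Cons.prems(2) by simp
  next
    case False
    have yx: "lt y x" using stoD(3)[OF Cons.prems(1), of x y] False Cons.prems(3) by simp
    have "sorted_wrt lt (insort_by lt x ys)" using Cons.IH[OF s] Cons.prems(2,3) by simp
    moreover have "\<forall>z\<in>set (insort_by lt x ys). lt y z" using yx Cons.prems(2) by (simp add: set_insort)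
    ultimately show ?thesis using False by simp
  qed
qed

lemma sorted_sort: "sto lt (set xs) \<Longrightarrow> distinct xs \<Longrightarrow> sorted_wrt lt (sort_by lt xs)"
proof (induction xs)
  case Nil then show ?case by (simp add: sort_by_def)
next
  case (Cons x xs)
  have "sto lt (set xs)" by (rule sto_mono[OF Cons.prems(1)]) auto
  then have 1: "sorted_wrt lt (sort_by lt xs)" using Cons by simp
  have 2: "sto lt (insert x (set (sort_by lt xs)))" using Cons.prems(1) by (simp add: set_sort)
  have 3: "x \<notin> set (sort_by lt xs)" using Cons.prems(2) by (simp add: set_sort)
  have "sorted_wrt lt (insort_by lt x (sort_by lt xs))" using sorted_insort[OF 2 1 3] .
  then show ?case by (simp add: sort_by_def)
qed

lemma set_merge: "set (merge_by lt xs ys) = set xs \<union> set ys"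
  by (induction lt xs ys rule: merge_by.induct) auto

lemma sorted_merge:
  "sto lt (set xs \<union> set ys) \<Longrightarrow> sorted_wrt lt xs \<Longrightarrow> sorted_wrt lt ys \<Longrightarrow> set xs \<inter> set ys = {}
   \<Longrightarrow> sorted_wrt lt (merge_by lt xs ys)"
proof (induction lt xs ys rule: merge_by.induct)
  case (1 lt ys) then show ?case by simp
next
  case (2 lt v va) then show ?case by simp
next
  case (3 lt x xs y ys)
  note st = "3.prems"(1)
  show ?case
  proof (cases "lt x y")
    case True
    have s: "sto lt (set xs \<union> set (y # ys))" by (rule sto_mono[OF st]) auto
    have "\<forall>z\<in>set (y#ys). lt x z"
    proof
      fix z assume z: "z \<in> set (y#ys)"
      show "lt x z"
      proof (cases "z = y")
        case True then show ?thesis using \<open>lt x y\<close> by simp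
      next
        case False
        then have "lt y z" using z "3.prems"(3) by simp
        then show ?thesis using stoD(2)[OF st, of x y z] \<open>lt x y\<close> z by (meson Un_iff list.set_intros(1))
      qed
    qed
    moreover have "\<forall>z\<in>set xs. lt x z" using "3.prems"(2) by simp
    moreover have "sorted_wrt lt (merge_by lt xs (y # ys))"
      using "3.IH"(1)[OF True s] "3.prems"(2,3,4) by simp
    ultimately show ?thesis using True by (auto simp add: set_merge)
  next
    case False
    have s: "sto lt (set (x#xs) \<union> set ys)" by (rule sto_mono[OF st]) auto
    have yx: "lt y x" using stoD(3)[OF st, of x y] False "3.prems"(4) by auto
    have "\<forall>z\<in>set (x#xs). lt y z"
    proof
      fix z assume z: "z \<in> set (x#xs)"
      show "lt y z"
      proof (cases "z = x")
        case True then show ?thesis using yx by simp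
      next
        case False
        then have "lt x z" using z "3.prems"(2) by simp
        then show ?thesis using stoD(2)[OF st, of y x z] yx z by (meson Un_iff list.set_intros(1))
      qed
    qed
    moreover have "\<forall>z\<in>set ys. lt y z" using "3.prems"(3) by simp
    moreover have "sorted_wrt lt (merge_by lt (x # xs) ys)"
      using "3.IH"(2)[OF False s] "3.prems"(2,3,4) by simp
    ultimately show ?thesis using False by (auto simp add: set_merge)
  qed
qed

lemma sorted_unique:
  "sto lt (set xs) \<Longrightarrow> sorted_wrt lt xs \<Longrightarrow> sorted_wrt lt ys \<Longrightarrow> set xs = set ys \<Longrightarrow> xs = ys"
proof (induction xs arbitrary: ys)
  case Nil then show ?case by simp
next
  case (Cons x xs)
  note st = Cons.prems(1)
  obtain y ys' where ys: "ys = y # ys'" using Cons.prems(4) by (cases ys) auto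
  have xy: "x = y"
  proof (rule ccontr)
    assume ne: "x \<noteq> y"
    then have a: "x \<in> set ys'" "y \<in> set xs" using Cons.prems(4) ys by auto
    then have "lt y x" "lt x y" using Cons.prems(2,3) ys by auto
    then have "lt x x" using stoD(2)[OF st, of x y x] a by simp
    then show False using stoD(1)[OF st, of x] by simp
  qed
  have nx: "x \<notin> set xs"
  proof
    assume "x \<in> set xs"
    then have "lt x x" using Cons.prems(2) by simp
    then show False using stoD(1)[OF st, of x] by simp
  qed
  have ny: "y \<notin> set ys'"
  proof
    assume "y \<in> set ys'"
    then have "lt y y" using Cons.prems(3) ys by simp
    then show False using stoD(1)[OF st, of y] xy by simp
  qed
  have "set xs = set ys'" using Cons.prems(4) ys xy nx ny by auto
  moreover have "sto lt (set xs)" by (rule sto_mono[OF st]) auto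
  ultimately have "xs = ys'" using Cons.IH Cons.prems(2,3) ys by simp
  then show ?case using ys xy by simp
qed

lemma sto_key:
  assumes "inj_on f A"
  shows "sto (\<lambda>i j. lxp (f i :: 'a::linorder list) (f j)) A"
  using assms unfolding sto_def inj_on_def
  using lexordp_irreflexive' lexordp_trans lexordp_linear by metis

lemma sto_cong:
  assumes h: "sto lt A" and c: "\<And>x y. x \<in> A \<Longrightarrow> y \<in> A \<Longrightarrow> lt x y = lt' x y"
  shows "sto lt' A"
  unfolding sto_def
proof (intro conjI ballI impI)
  fix x assume "x \<in> A" then show "\<not> lt' x x" using c[of x x] stoD(1)[OF h, of x] by simp
next
  fix x y z assume "x \<in> A" "y \<in> A" "z \<in> A" "lt' x y" "lt' y z"
  then show "lt' x z" using c[of x y] c[of y z] c[of x z] stoD(2)[OF h, of x y z] by simp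
next
  fix x y assume "x \<in> A" "y \<in> A" "x \<noteq> y"
  then show "lt' x y \<or> lt' y x" using c[of x y] c[of y x] stoD(3)[OF h, of x y] by blast
qed

lemma inj_drop: "inj_on (\<lambda>i. drop (i - 1) xs) {1..<length xs + 1}"
proof (rule inj_onI)
  fix x y assume "x \<in> {1..<length xs + 1}" "y \<in> {1..<length xs + 1}"
    "drop (x - 1) xs = drop (y - 1) xs"
  then have "length (drop (x - 1) xs) = length (drop (y - 1) xs)" by simp
  then have "length xs - (x - 1) = length xs - (y - 1)" by simp
  moreover have "1 \<le> x" "x \<le> length xs" "1 \<le> y" "y \<le> length xs"
    using \<open>x \<in> _\<close> \<open>y \<in> _\<close> by auto
  ultimately show "x = y" by arith
qed

lemma factor_n: "1 \<le> i \<Longrightarrow> factor W i (length W) = drop (i - 1) W"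
  unfolding factor_def by simp

lemma factor_m: "1 \<le> i \<Longrightarrow> i \<le> m + 1 \<Longrightarrow> factor W i m = drop (i - 1) (take m W)"
  unfolding factor_def by (simp add: take_drop)

lemma suffix_cmp:
  assumes "lxp a b" "S = pa @ a" "S = pb @ b"
    and K: "\<And>u x. S = u @ x \<Longrightarrow> x \<noteq> [] \<Longrightarrow> lxp V (x @ V)"
  shows "lxp (a @ V) (b @ (V::'a::linorder list))"
proof -
  from assms(1) consider c w where "b = a @ c # w"
    | p x y s t where "x < y" "a = p @ x # s" "b = p @ y # t"
    unfolding lexordp_iff by blast
  then show ?thesis
  proof cases
    case 1
    have "S = (pb @ a) @ (c # w)" using 1 assms(3) by simp
    then have "lxp V ((c # w) @ V)" using K by blast
    then have "lxp (a @ V) (a @ (c # w) @ V)" by (rule lexordp_append_leftI)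
    then show ?thesis using 1 by simp
  next
    case 2
    have "a @ V = p @ x # (s @ V)" "b @ V = p @ y # (t @ V)" using 2 by simp_all
    then show ?thesis using 2(1) unfolding lexordp_iff by blast
  qed
qed

theorem proposition1:
  fixes W :: "'a::{linorder, finite} list"
    and Ls :: "'a list list"
    and l :: nat
  assumes "W \<noteq> []"
    and "lyndon_factorization Ls W"
    and "1 \<le> l" and "l < length Ls"
  defines "n \<equiv> length W"
    and "m \<equiv> length (concat (take l Ls))"
  shows "sort_by (\<lambda>i j. lex_less (factor W i n) (factor W j n)) [1..<n+1] =
         merge_by (\<lambda>i j. lex_less (factor W i n) (factor W j n))
           (sort_by (\<lambda>i j. lex_less (factor W i m) (factor W j m)) [1..<m+1])
           (sort_by (\<lambda>i j. lex_less (factor W i n) (factor W j n)) [m+1..<n+1])"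
proof -
  define ltn where "ltn = (\<lambda>i j. lex_less (factor W i n) (factor W j n))"
  define ltm where "ltm = (\<lambda>i j. lex_less (factor W i m) (factor W j m))"
  define S where "S = concat (take l Ls)"
  define V where "V = concat (drop l Ls)"
  have WSV: "W = S @ V" using assms(2) unfolding S_def V_def lyndon_factorization_def
    by (metis append_take_drop_id concat_append)
  have mS: "m = length S" unfolding m_def S_def ..
  have mn: "m \<le> n" unfolding n_def mS WSV by simp
  have tm: "take m W = S" unfolding WSV mS by simp
  have srt: "sorted_wrt (\<lambda>x y. lex_le y x) (take l Ls @ drop l Ls)"
    and lyn: "\<forall>L\<in>set (take l Ls @ drop l Ls). lyndon L"
    using assms(2) unfolding lyndon_factorization_def by auto
  have K: "\<And>u x. S = u @ x \<Longrightarrow> x \<noteq> [] \<Longrightarrow> lxp V (x @ V)"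
    using key[OF srt lyn] unfolding S_def V_def by blast
  have ltn_eq: "ltn i j = lxp (drop (i - 1) W) (drop (j - 1) W)" if "1 \<le> i" "1 \<le> j" for i j
    unfolding ltn_def n_def using that by (simp add: factor_n ll)
  have ltm_eq: "ltm i j = lxp (drop (i - 1) S) (drop (j - 1) S)" if "i \<in> {1..<m+1}" "j \<in> {1..<m+1}" for i j
    unfolding ltm_def using that by (simp add: factor_m ll tm)
  have ston: "sto ltn {1..<n+1}"
  proof (rule sto_cong)
    show "sto (\<lambda>i j. lxp (drop (i - 1) W) (drop (j - 1) W)) {1..<n+1}"
      using sto_key[OF inj_drop[of W]] unfolding n_def .
  qed (simp add: ltn_eq)
  have stom: "sto ltm {1..<m+1}"
  proof (rule sto_cong)
    show "sto (\<lambda>i j. lxp (drop (i - 1) S) (drop (j - 1) S)) {1..<m+1}"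
      using sto_key[OF inj_drop[of S]] unfolding mS .
  qed (simp add: ltm_eq)
  have mono: "ltn i j" if "i \<in> {1..<m+1}" "j \<in> {1..<m+1}" "ltm i j" for i j
  proof -
    have a: "lxp (drop (i - 1) S) (drop (j - 1) S)" using ltm_eq that by simp
    have "lxp (drop (i - 1) S @ V) (drop (j - 1) S @ V)"
      by (rule suffix_cmp[OF a, where pa="take (i - 1) S" and pb="take (j - 1) S", OF _ _ K]) simp_all
    moreover have "drop (i - 1) W = drop (i - 1) S @ V" "drop (j - 1) W = drop (j - 1) S @ V"
      using that unfolding WSV mS by auto
    ultimately show ?thesis using ltn_eq that by simp
  qed
  define A where "A = sort_by ltm [1..<m+1]"
  define B where "B = sort_by ltn [m+1..<n+1]"
  define C where "C = sort_by ltn [1..<n+1]"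
  have setA: "set A = {1..<m+1}" unfolding A_def by (simp only: set_sort set_upt)
  have setB: "set B = {m+1..<n+1}" unfolding B_def by (simp only: set_sort set_upt)
  have setC: "set C = {1..<n+1}" unfolding C_def by (simp only: set_sort set_upt)
  have sA: "sorted_wrt ltm A" unfolding A_def by (rule sorted_sort) (simp_all only: set_upt stom distinct_upt)
  have sA': "sorted_wrt ltn A" using sorted_wrt_mono_rel[OF _ sA, of ltn] mono setA by blast
  have sB: "sorted_wrt ltn B" unfolding B_def
  proof (rule sorted_sort)
    show "sto ltn (set [m + 1..<n + 1])" unfolding set_upt by (rule sto_mono[OF ston]) auto
  qed simp
  have sC: "sorted_wrt ltn C" unfolding C_def by (rule sorted_sort) (simp_all only: set_upt ston distinct_upt)
  have setM: "set (merge_by ltn A B) = {1..<n+1}" using mn by (auto simp: set_merge setA setB)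
  have sM: "sorted_wrt ltn (merge_by ltn A B)"
  proof (rule sorted_merge)
    have u: "set A \<union> set B = {1..<n+1}" using mn by (auto simp: setA setB)
    show "sto ltn (set A \<union> set B)" unfolding u by (rule ston)
    show "set A \<inter> set B = {}" by (auto simp: setA setB)
  qed (rule sA', rule sB)
  have "C = merge_by ltn A B"
    by (rule sorted_unique) (use sC sM setC setM ston in auto)
  then show ?thesis unfolding A_def B_def C_def ltn_def ltm_def .
qed

end
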